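(* Fix $i,j\in\{1,\dots,I\}$ and $v,v_*\in\mathbb{R}^3$, and let $E=\langle v\rangle_i^2+\langle v_*\rangle_j^2$ and $r=\frac{m_i}{m_i+m_j}$. Then there exist functions $p=p(v,v_*,m_i,m_j)$, $q=q(v,v_*,m_i,m_j)$ and $s=s(v,v_*,m_i,m_j)\in[0,1]$ with $p+q=E$ such that, with $\lambda:=2\sqrt{r(1-r)(sE-1)((1-s)E-1)}$, for every $\sigma\in S^2$ $$\langle v'\rangle_i^2=p+\lambda\,\sigma\cdot\hat V,\qquad \langle v'_*\rangle_j^2=q-\lambda\,\sigma\cdot\hat V,$$ so that $\langle v'\rangle_i^2+\langle v'_*\rangle_j^2=p+q=E=\langle v\rangle_i^2+\langle v_*\rangle_j^2$. Moreover $p+\lambda\le E$ and $q+\lambda\le E$ for all $v,v_*\in\mathbb{R}^3$ and all $m_i,m_j>0$.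
   Context: Masses $m_1,\dots,m_I>0$, $M:=\sum_{\ell=1}^I m_\ell$, $\langle v\rangle_i:=\big(1+\tfrac{m_i}{M}|v|^2\big)^{1/2}$. For the pair $(i,j)$: $V=\frac{m_iv+m_jv_*}{m_i+m_j}$ (center of mass velocity), $\hat V=V/|V|$, and $v'=V+\frac{m_j}{m_i+m_j}|v-v_*|\sigma$, $v'_*=V-\frac{m_i}{m_i+m_j}|v-v_*|\sigma$ for $\sigma\in S^2$. *)

theory Defs
  imports "HOL-Analysis.Analysis"
begin

definition total_mass :: "nat \<Rightarrow> (nat \<Rightarrow> real) \<Rightarrow> real" where
  "total_mass I m = (\<Sum>l=1..I. m l)"

definition jbr :: "real \<Rightarrow> real \<Rightarrow> real^3 \<Rightarrow> real" where
  "jbr M mi v = sqrt (1 + mi / M * (norm v)\<^sup>2)"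

definition cmvel :: "real \<Rightarrow> real \<Rightarrow> real^3 \<Rightarrow> real^3 \<Rightarrow> real^3" where
  "cmvel mi mj v vs = (1 / (mi + mj)) *\<^sub>R (mi *\<^sub>R v + mj *\<^sub>R vs)"

text \<open>Unit vector of V (0 when V = 0, by the convention 1/0 = 0).\<close>
definition unitv :: "real^3 \<Rightarrow> real^3" where
  "unitv V = (1 / norm V) *\<^sub>R V"

definition vpost :: "real \<Rightarrow> real \<Rightarrow> real^3 \<Rightarrow> real^3 \<Rightarrow> real^3 \<Rightarrow> real^3" where
  "vpost mi mj v vs \<sigma> = cmvel mi mj v vs + (mj / (mi + mj) * norm (v - vs)) *\<^sub>R \<sigma>"

definition vspost :: "real \<Rightarrow> real \<Rightarrow> real^3 \<Rightarrow> real^3 \<Rightarrow> real^3 \<Rightarrow> real^3" where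
  "vspost mi mj v vs \<sigma> = cmvel mi mj v vs - (mi / (mi + mj) * norm (v - vs)) *\<^sub>R \<sigma>"

end

theory Submission
  imports Defs
begin

lemma nsq_add: "(norm (x + y::real^3))\<^sup>2 = (norm x)\<^sup>2 + 2 * (x \<bullet> y) + (norm y)\<^sup>2"
  by (simp add: power2_norm_eq_inner inner_add inner_commute)

lemma nsq_diff: "(norm (x - y::real^3))\<^sup>2 = (norm x)\<^sup>2 - 2 * (x \<bullet> y) + (norm y)\<^sup>2"
  by (simp add: power2_norm_eq_inner inner_diff inner_commute)

theorem lemma4p1:
  fixes I :: nat and m :: "nat \<Rightarrow> real" and i j :: nat and v vs :: "real^3"
  assumes mpos: "\<And>l. l \<in> {1..I} \<Longrightarrow> m l > 0"
    and i: "i \<in> {1..I}" and j: "j \<in> {1..I}"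
  shows "let M = total_mass I m;
             E = (jbr M (m i) v)\<^sup>2 + (jbr M (m j) vs)\<^sup>2;
             r = m i / (m i + m j);
             Vh = unitv (cmvel (m i) (m j) v vs)
         in \<exists>p q s. s \<in> {0..1} \<and> p + q = E \<and>
              (let lam = 2 * sqrt (r * (1 - r) * (s * E - 1) * ((1 - s) * E - 1)) in
                 (\<forall>\<sigma> \<in> sphere (0::real^3) 1.
                    (jbr M (m i) (vpost (m i) (m j) v vs \<sigma>))\<^sup>2 = p + lam * (\<sigma> \<bullet> Vh) \<and>
                    (jbr M (m j) (vspost (m i) (m j) v vs \<sigma>))\<^sup>2 = q - lam * (\<sigma> \<bullet> Vh))
                 \<and> p + lam \<le> E \<and> q + lam \<le> E)"
proof -
  define M where "M = total_mass I m"
  define mi where "mi = m i"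
  define mj where "mj = m j"
  define mu where "mu = mi + mj"
  define V where "V = cmvel mi mj v vs"
  define w where "w = v - vs"
  define u where "u = norm w"
  define nV where "nV = norm V"
  have mi0: "mi > 0" using mpos i mi_def by auto
  have mj0: "mj > 0" using mpos j mj_def by auto
  have mu0: "mu > 0" using mi0 mj0 mu_def by auto
  have "M \<ge> mi" unfolding M_def total_mass_def mi_def
    using i mpos by (intro member_le_sum) (auto simp: less_imp_le)
  hence M0: "M > 0" using mi0 by auto
  have hv: "v = V + (mj/mu) *\<^sub>R w"
    unfolding V_def w_def cmvel_def mu_def using mu0 mu_def
    by (simp add: vec_eq_iff divide_simps) (simp add: algebra_simps)
  have hvs: "vs = V - (mi/mu) *\<^sub>R w"
    unfolding V_def w_def cmvel_def mu_def using mu0 mu_def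
    by (simp add: vec_eq_iff divide_simps) (simp add: algebra_simps)
  have nv: "(norm v)\<^sup>2 = nV\<^sup>2 + 2*(mj/mu)*(V \<bullet> w) + (mj/mu)\<^sup>2 * u\<^sup>2"
    using mj0 mu0 by (subst hv, simp add: nsq_add nV_def u_def power_mult_distrib power_divide)
  have nvs: "(norm vs)\<^sup>2 = nV\<^sup>2 - 2*(mi/mu)*(V \<bullet> w) + (mi/mu)\<^sup>2 * u\<^sup>2"
    using mi0 mu0 by (subst hvs, simp add: nsq_diff nV_def u_def power_mult_distrib power_divide)
  have sq: "(jbr M mm x)\<^sup>2 = 1 + mm / M * (norm x)\<^sup>2" if "mm > 0" for mm x
    unfolding jbr_def using that M0 by (simp add: real_sqrt_pow2)
  define E where "E = (jbr M mi v)\<^sup>2 + (jbr M mj vs)\<^sup>2"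
  define X where "X = mu / M * nV\<^sup>2"
  define Y where "Y = mi * mj * u\<^sup>2 / (mu * M)"
  have X0: "X \<ge> 0" using X_def mu0 M0 by simp
  have Y0: "Y \<ge> 0" using Y_def mu0 M0 mi0 mj0 by simp
  have en1: "mi * (norm v)\<^sup>2 + mj * (norm vs)\<^sup>2 = (mi + mj) * nV\<^sup>2 + (mi*mj*(mi+mj)/mu\<^sup>2) * u\<^sup>2"
    unfolding nv nvs by (simp add: algebra_simps power2_eq_square add_divide_distrib)
  have en2: "mi*mj*(mi+mj)/mu\<^sup>2 = mi*mj/mu" using mu0 mu_def by (simp add: power2_eq_square)
  have en: "mi * (norm v)\<^sup>2 + mj * (norm vs)\<^sup>2 = mu * nV\<^sup>2 + mi*mj*u\<^sup>2/mu"
    using en1 en2 mu_def by (metis times_divide_eq_left)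
  have EXY: "E = 2 + X + Y"
  proof -
    have "E = 2 + (mi * (norm v)\<^sup>2 + mj * (norm vs)\<^sup>2) / M"
      unfolding E_def sq[OF mi0] sq[OF mj0] by (simp add: add_divide_distrib)
    also have "\<dots> = 2 + X + Y" unfolding en X_def Y_def by (simp add: add_divide_distrib)
    finally show ?thesis .
  qed
  define p where "p = 1 + mi/M * (nV\<^sup>2 + (mj/mu)\<^sup>2 * u\<^sup>2)"
  define q where "q = 1 + mj/M * (nV\<^sup>2 + (mi/mu)\<^sup>2 * u\<^sup>2)"
  define s where "s = (1 + X) / E"
  define r where "r = mi / (mi + mj)"
  define c where "c = mi * mj * u * nV / (M * mu)"
  have E0: "E > 0" using EXY X0 Y0 by simp
  have s01: "s \<in> {0..1}" unfolding s_def using EXY X0 Y0 E0 by simp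
  have pq: "p + q = E"
  proof -
    have "p + q = 2 + (mi + mj) / M * nV\<^sup>2 + (mi*mj*(mi+mj)/mu\<^sup>2) * u\<^sup>2 / M"
      unfolding p_def q_def by (simp add: algebra_simps power2_eq_square add_divide_distrib)
    also have "\<dots> = 2 + X + Y" unfolding X_def Y_def mu_def[symmetric] using mu0 M0 by (simp add: field_simps power2_eq_square)
    finally show ?thesis using EXY by simp
  qed
  have sE1: "s * E - 1 = X" unfolding s_def using E0 by simp
  have sE2: "(1 - s) * E - 1 = Y" using sE1 EXY by (simp add: algebra_simps)
  have r1: "1 - r = mj / mu" unfolding r_def mu_def using mu0 mu_def by (simp add: field_simps)
  have "r * (1 - r) * X * Y = c\<^sup>2" unfolding r1 unfolding r_def X_def Y_def c_def mu_def[symmetric]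
    using mu0 M0 by (simp add: field_simps power2_eq_square)
  moreover have "c \<ge> 0" unfolding c_def u_def nV_def using mi0 mj0 mu0 M0 by simp
  ultimately have lam: "2 * sqrt (r * (1 - r) * (s * E - 1) * ((1 - s) * E - 1)) = 2 * c"
    using sE1 sE2 by simp
  have dot: "\<sigma> \<bullet> V = nV * (\<sigma> \<bullet> unitv V)" for \<sigma> :: "real^3"
    unfolding unitv_def nV_def by (cases "norm V = 0") auto
  have c2: "2 * c * (\<sigma> \<bullet> unitv V) = 2 * (mi/M) * (mj/mu) * u * (\<sigma> \<bullet> V)" for \<sigma>
    unfolding dot c_def by simp
  have c3: "2 * c * (\<sigma> \<bullet> unitv V) = 2 * (mj/M) * (mi/mu) * u * (\<sigma> \<bullet> V)" for \<sigma>
    unfolding c2 by simp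
  have post1: "(jbr M mi (vpost mi mj v vs \<sigma>))\<^sup>2 = p + 2 * c * (\<sigma> \<bullet> unitv V)"
    if "norm \<sigma> = 1" for \<sigma>
  proof -
    have "vpost mi mj v vs \<sigma> = V + (mj/mu * u) *\<^sub>R \<sigma>"
      unfolding vpost_def V_def u_def w_def mu_def ..
    hence "(norm (vpost mi mj v vs \<sigma>))\<^sup>2 = nV\<^sup>2 + 2 * (mj/mu*u) * (\<sigma> \<bullet> V) + (mj/mu*u)\<^sup>2"
      using that mj0 mu0 by (simp add: nsq_add nV_def inner_commute power_mult_distrib power_divide)
    thus ?thesis unfolding sq[OF mi0] c2 p_def
      by (simp add: algebra_simps power2_eq_square)
  qed
  have post2: "(jbr M mj (vspost mi mj v vs \<sigma>))\<^sup>2 = q - 2 * c * (\<sigma> \<bullet> unitv V)"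
    if "norm \<sigma> = 1" for \<sigma>
  proof -
    have "vspost mi mj v vs \<sigma> = V - (mi/mu * u) *\<^sub>R \<sigma>"
      unfolding vspost_def V_def u_def w_def mu_def ..
    hence N: "(norm (vspost mi mj v vs \<sigma>))\<^sup>2 = nV\<^sup>2 - 2 * (mi/mu*u) * (\<sigma> \<bullet> V) + (mi/mu*u)\<^sup>2"
      using that mi0 mu0 by (simp add: nsq_diff nV_def inner_commute power_mult_distrib power_divide)
    show ?thesis unfolding sq[OF mj0] N c3 q_def
      by (simp add: algebra_simps power_mult_distrib power_divide)
  qed
  have amgm: "2 * k * a * b \<le> k * (a\<^sup>2 + b\<^sup>2)" if "k \<ge> 0" for k a b :: real
  proof -
    have "0 \<le> k * (a - b)\<^sup>2" using that by simp
    thus ?thesis by (simp add: algebra_simps power2_eq_square)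
  qed
  have cp: "2 * c \<le> p - 1"
  proof -
    have "2 * c = 2 * (mi/M) * nV * ((mj/mu) * u)" unfolding c_def by simp
    also have "\<dots> \<le> (mi/M) * (nV\<^sup>2 + ((mj/mu) * u)\<^sup>2)"
      using amgm[of "mi/M" nV "(mj/mu)*u"] mi0 M0 by simp
    finally show ?thesis unfolding p_def by (simp add: power_mult_distrib power_divide)
  qed
  have cq: "2 * c \<le> q - 1"
  proof -
    have "2 * c = 2 * (mj/M) * nV * ((mi/mu) * u)" unfolding c_def by simp
    also have "\<dots> \<le> (mj/M) * (nV\<^sup>2 + ((mi/mu) * u)\<^sup>2)"
      using amgm[of "mj/M" nV "(mi/mu)*u"] mj0 M0 by simp
    finally show ?thesis unfolding q_def by (simp add: power_mult_distrib power_divide)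
  qed
  have main: "\<exists>p q s. s \<in> {0..1} \<and> p + q = E \<and>
              (let lam = 2 * sqrt (r * (1 - r) * (s * E - 1) * ((1 - s) * E - 1)) in
                 (\<forall>\<sigma> \<in> sphere (0::real^3) 1.
                    (jbr M mi (vpost mi mj v vs \<sigma>))\<^sup>2 = p + lam * (\<sigma> \<bullet> unitv V) \<and>
                    (jbr M mj (vspost mi mj v vs \<sigma>))\<^sup>2 = q - lam * (\<sigma> \<bullet> unitv V))
                 \<and> p + lam \<le> E \<and> q + lam \<le> E)"
    apply (rule exI[of _ p], rule exI[of _ q], rule exI[of _ s])
    unfolding Let_def lam using s01 pq post1 post2 cp cq by auto
  show ?thesis using main unfolding M_def[symmetric] mi_def mj_def r_def E_def V_def by simp
qed

end
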